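(* Let $G$ and $H$ be groups with $G$ finitely generated, torsion-free and residually finite. Suppose that $1\times H$ is a characteristic subgroup of $G\times H$. Then $\operatorname{Spec}_R(G\times H)=\operatorname{Spec}_R(G)\cdot\operatorname{Spec}_R(H)$.
   Context: $R(\psi)$ is the Reidemeister number of an endomorphism $\psi$ of a group $A$ (number of classes of $x\sim gx\psi(g)^{-1}$), $\operatorname{Spec}_R(A)=\{R(\psi)\mid\psi\in\operatorname{Aut}(A)\}$, and for $S,T\subseteq\mathbb{N}\cup\{\infty\}$, $S\cdot T=\{st\mid s\in S,t\in T\}$ with $a\cdot\infty=\infty$. *)

theory Defs
  imports "HOL-Algebra.Algebra" "HOL-Library.Extended_Nat"
begin

definition fin_gen_group :: "('a, 'c) monoid_scheme \<Rightarrow> bool" where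
  "fin_gen_group G \<longleftrightarrow> (\<exists>S. finite S \<and> S \<subseteq> carrier G \<and> generate G S = carrier G)"

definition torsion_free :: "('a, 'c) monoid_scheme \<Rightarrow> bool" where
  "torsion_free G \<longleftrightarrow>
     (\<forall>x \<in> carrier G. \<forall>n::nat. n > 0 \<longrightarrow> x [^]\<^bsub>G\<^esub> n = \<one>\<^bsub>G\<^esub> \<longrightarrow> x = \<one>\<^bsub>G\<^esub>)"

definition residually_finite :: "('a, 'c) monoid_scheme \<Rightarrow> bool" where
  "residually_finite G \<longleftrightarrow>
     (\<forall>x \<in> carrier G. x \<noteq> \<one>\<^bsub>G\<^esub> \<longrightarrow>
        (\<exists>N. N \<lhd> G \<and> finite (rcosets\<^bsub>G\<^esub> N) \<and> x \<notin> N))"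

definition characteristic :: "'a set \<Rightarrow> ('a, 'c) monoid_scheme \<Rightarrow> bool" where
  "characteristic N G \<longleftrightarrow> subgroup N G \<and> (\<forall>\<phi> \<in> auto G. \<phi> ` N = N)"

definition reid_classes :: "('a, 'c) monoid_scheme \<Rightarrow> ('a \<Rightarrow> 'a) \<Rightarrow> 'a set set" where
  "reid_classes G \<psi> =
     (\<lambda>x. {g \<otimes>\<^bsub>G\<^esub> x \<otimes>\<^bsub>G\<^esub> inv\<^bsub>G\<^esub> (\<psi> g) | g. g \<in> carrier G}) ` carrier G"

definition reidemeister :: "('a, 'c) monoid_scheme \<Rightarrow> ('a \<Rightarrow> 'a) \<Rightarrow> enat" where
  "reidemeister G \<psi> =
     (if finite (reid_classes G \<psi>) then enat (card (reid_classes G \<psi>)) else \<infinity>)"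

definition spec_R :: "('a, 'c) monoid_scheme \<Rightarrow> enat set" where
  "spec_R G = {reidemeister G \<psi> | \<psi>. \<psi> \<in> auto G}"

definition rmul :: "enat \<Rightarrow> enat \<Rightarrow> enat" where
  "rmul a b = (if a = \<infinity> \<or> b = \<infinity> then \<infinity> else a * b)"

definition set_rmul :: "enat set \<Rightarrow> enat set \<Rightarrow> enat set" where
  "set_rmul S T = {rmul s t | s t. s \<in> S \<and> t \<in> T}"

end

theory Submission
  imports Defs Complex_Main
begin
lemma landau_aux:
  fixes s :: "'i \<Rightarrow> nat"
  shows "finite I \<Longrightarrow> card I = k \<Longrightarrow> (\<forall>i\<in>I. s i \<ge> 1) \<Longrightarrow> q \<ge> 1 \<Longrightarrow>
    (\<Sum>i\<in>I. 1 / real (s i)) = real p / real q \<Longrightarrow> i \<in> I \<Longrightarrow> s i \<le> (k*q)^(2^k)"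
proof (induction k arbitrary: I q p i)
  case 0
  then show ?case by auto
next
  case (Suc k)
  have ne: "I \<noteq> {}" using Suc by auto
  obtain m where m: "m \<in> I" "\<forall>j\<in>I. s m \<le> s j"
  proof -
    have "Min (s ` I) \<in> s ` I" using Suc.prems(1) ne by simp
    then obtain m where "m \<in> I" "s m = Min (s ` I)" by auto
    moreover have "\<forall>j\<in>I. Min (s ` I) \<le> s j" using Suc.prems(1) by simp
    ultimately show ?thesis using that by auto
  qed
  have sm1: "s m \<ge> 1" using Suc.prems m by auto
  have "(\<Sum>i\<in>I. 1 / real (s i)) \<le> (\<Sum>i\<in>I. 1 / real (s m))"
    by (rule sum_mono) (use m Suc.prems(3) in \<open>auto simp: frac_le\<close>)
  also have "\<dots> = real (Suc k) / real (s m)" using Suc.prems by simp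
  finally have le1: "real p / real q \<le> real (Suc k) / real (s m)" using Suc.prems by simp
  have pos: "(\<Sum>i\<in>I. 1 / real (s i)) > 0"
    by (rule sum_pos[OF Suc.prems(1) ne]) (use Suc.prems(3) in fastforce)
  hence pp: "p \<ge> 1" using Suc.prems by (cases p) auto
  have "real p * real (s m) \<le> real (Suc k) * real q"
    using le1 sm1 Suc.prems(4) by (simp add: divide_simps)
  moreover have "real (s m) \<le> real p * real (s m)" using pp by (simp add: mult_le_cancel_right1)
  ultimately have "real (s m) \<le> real (Suc k) * real q" by linarith
  hence smb: "s m \<le> Suc k * q" by (metis of_nat_le_iff of_nat_mult)
  have qpos: "Suc k * q \<ge> 1" using Suc.prems(4) by simp
  have base: "Suc k * q \<le> (Suc k * q)^(2^Suc k)"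
    using qpos by (simp add: self_le_power)
  show ?case
  proof (cases "i = m")
    case True then show ?thesis using smb base le_trans by blast
  next
    case False
    let ?I = "I - {m}"
    have sum_split: "(\<Sum>i\<in>I. 1 / real (s i)) = 1 / real (s m) + (\<Sum>i\<in>?I. 1 / real (s i))"
      using Suc.prems(1) m(1) by (simp add: sum.remove)
    have nn: "(\<Sum>i\<in>?I. 1 / real (s i)) \<ge> 0" by (rule sum_nonneg) auto
    have eq: "(\<Sum>i\<in>?I. 1 / real (s i)) = (real p * real (s m) - real q) / (real q * real (s m))"
      using sum_split Suc.prems(5) sm1 Suc.prems(4) by (simp add: field_simps)
    have qs: "real q * real (s m) > 0" using sm1 Suc.prems(4) by simp
    have "real p * real (s m) - real q \<ge> 0"
      using nn eq qs by (metis not_less zero_le_divide_iff)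
    hence ge: "p * s m \<ge> q" by (metis diff_ge_0_iff_ge of_nat_le_iff of_nat_mult)
    have eq2: "(\<Sum>i\<in>?I. 1 / real (s i)) = real (p * s m - q) / real (q * s m)"
      using eq ge by (simp add: of_nat_diff)
    have "s i \<le> (k * (q * s m))^(2^k)"
      by (rule Suc.IH[OF _ _ _ _ eq2]) (use Suc.prems m False sm1 in auto)
    also have "\<dots> \<le> (Suc k * q * (Suc k * q))^(2^k)"
    proof (rule power_mono)
      have "k * (q * s m) \<le> k * (q * (Suc k * q))" using smb by simp
      also have "\<dots> = (k * q) * (Suc k * q)" by simp
      also have "\<dots> \<le> (Suc k * q) * (Suc k * q)" by (intro mult_right_mono) auto
      finally show "k * (q * s m) \<le> Suc k * q * (Suc k * q)" .
    qed simp
    also have "\<dots> = (Suc k * q)^(2^Suc k)"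
      by (simp add: power_mult[symmetric] power2_eq_square[symmetric] mult.commute)
    finally show ?thesis .
  qed
qed

definition tw :: "('a, 'c) monoid_scheme \<Rightarrow> ('a \<Rightarrow> 'a) \<Rightarrow> 'a \<Rightarrow> 'a \<Rightarrow> 'a" where
  "tw G \<psi> g x = g \<otimes>\<^bsub>G\<^esub> x \<otimes>\<^bsub>G\<^esub> inv\<^bsub>G\<^esub> (\<psi> g)"

definition tcls :: "('a, 'c) monoid_scheme \<Rightarrow> ('a \<Rightarrow> 'a) \<Rightarrow> 'a \<Rightarrow> 'a set" where
  "tcls G \<psi> x = (\<lambda>g. tw G \<psi> g x) ` carrier G"

lemma reid_classes_tcls: "reid_classes G \<psi> = tcls G \<psi> ` carrier G"
  unfolding reid_classes_def tcls_def tw_def by (auto simp: image_def)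

locale twist = group G for G (structure) + fixes \<psi> assumes hom: "\<psi> \<in> hom G G"
begin

interpretation H: group_hom G G \<psi> using hom by unfold_locales

lemma psi_closed[simp]: "x \<in> carrier G \<Longrightarrow> \<psi> x \<in> carrier G"
  using hom by (auto simp: hom_def)

lemma tw_closed[simp]: "g \<in> carrier G \<Longrightarrow> x \<in> carrier G \<Longrightarrow> tw G \<psi> g x \<in> carrier G"
  by (simp add: tw_def)

lemma tw_one[simp]: "x \<in> carrier G \<Longrightarrow> tw G \<psi> \<one> x = x"
  by (simp add: tw_def)

lemma tw_mult: "a \<in> carrier G \<Longrightarrow> b \<in> carrier G \<Longrightarrow> x \<in> carrier G \<Longrightarrow>
   tw G \<psi> (a \<otimes> b) x = tw G \<psi> a (tw G \<psi> b x)"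
  by (simp add: tw_def H.hom_mult inv_mult_group m_assoc)

lemma tw_inv: "a \<in> carrier G \<Longrightarrow> x \<in> carrier G \<Longrightarrow> tw G \<psi> (inv a) (tw G \<psi> a x) = x"
  by (simp add: tw_mult[symmetric])

lemma tcls_sub: "x \<in> carrier G \<Longrightarrow> tcls G \<psi> x \<subseteq> carrier G"
  by (auto simp: tcls_def)

lemma tcls_self: "x \<in> carrier G \<Longrightarrow> x \<in> tcls G \<psi> x"
  unfolding tcls_def by (rule image_eqI[of _ _ \<one>]) auto

lemma tcls_eq: assumes "x \<in> carrier G" "y \<in> tcls G \<psi> x" shows "tcls G \<psi> y = tcls G \<psi> x"
proof -
  obtain a where a: "a \<in> carrier G" "y = tw G \<psi> a x" using assms by (auto simp: tcls_def)
  show ?thesis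
  proof
    show "tcls G \<psi> y \<subseteq> tcls G \<psi> x"
      using a assms(1) by (auto simp: tcls_def tw_mult[symmetric] intro!: image_eqI)
    show "tcls G \<psi> x \<subseteq> tcls G \<psi> y"
    proof
      fix z assume "z \<in> tcls G \<psi> x"
      then obtain b where b: "b \<in> carrier G" "z = tw G \<psi> b x" by (auto simp: tcls_def)
      have "z = tw G \<psi> (b \<otimes> inv a) y" using a b assms(1) by (simp add: tw_mult tw_inv)
      thus "z \<in> tcls G \<psi> y" using a b by (auto simp: tcls_def)
    qed
  qed
qed

lemma tcls_eq_iff: "x \<in> carrier G \<Longrightarrow> y \<in> carrier G \<Longrightarrow> tcls G \<psi> x = tcls G \<psi> y \<longleftrightarrow> y \<in> tcls G \<psi> x"
  using tcls_eq[of x y] tcls_self[of y] by auto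

lemma classes_disjoint: "A \<in> reid_classes G \<psi> \<Longrightarrow> B \<in> reid_classes G \<psi> \<Longrightarrow> A \<noteq> B \<Longrightarrow> A \<inter> B = {}"
proof -
  assume a: "A \<in> reid_classes G \<psi>" "B \<in> reid_classes G \<psi>" "A \<noteq> B"
  then obtain x y where xy: "x \<in> carrier G" "y \<in> carrier G" "A = tcls G \<psi> x" "B = tcls G \<psi> y"
    by (auto simp: reid_classes_tcls)
  show ?thesis
  proof (rule ccontr)
    assume "A \<inter> B \<noteq> {}"
    then obtain z where z: "z \<in> tcls G \<psi> x" "z \<in> tcls G \<psi> y" using xy by auto
    have "tcls G \<psi> z = tcls G \<psi> x" by (rule tcls_eq[OF xy(1) z(1)])
    moreover have "tcls G \<psi> z = tcls G \<psi> y" by (rule tcls_eq[OF xy(2) z(2)])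
    ultimately show False using a xy by simp
  qed
qed

lemma classes_union: "\<Union>(reid_classes G \<psi>) = carrier G"
  unfolding reid_classes_tcls using tcls_self tcls_sub by blast

definition St where "St x = {g \<in> carrier G. tw G \<psi> g x = x}"

lemma orbit_stab:
  assumes fin: "finite (carrier G)" and x: "x \<in> carrier G"
  shows "card (carrier G) = card (tcls G \<psi> x) * card (St x)"
proof -
  let ?f = "\<lambda>g. tw G \<psi> g x"
  define fib where "fib c = {g \<in> carrier G. ?f g = c}" for c
  have fibeq: "fib (?f g0) = (\<lambda>s. g0 \<otimes> s) ` St x" if g0: "g0 \<in> carrier G" for g0
  proof
    show "fib (?f g0) \<subseteq> (\<lambda>s. g0 \<otimes> s) ` St x"
    proof
      fix g assume g: "g \<in> fib (?f g0)"
      hence gc: "g \<in> carrier G" and e: "?f g = ?f g0" by (auto simp: fib_def)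
      have "?f (inv g0 \<otimes> g) = x" using gc g0 x e by (simp add: tw_mult tw_inv)
      hence "inv g0 \<otimes> g \<in> St x" using gc g0 by (simp add: St_def)
      moreover have "g = g0 \<otimes> (inv g0 \<otimes> g)" using gc g0 by (simp add: m_assoc[symmetric])
      ultimately show "g \<in> (\<lambda>s. g0 \<otimes> s) ` St x" by blast
    qed
    show "(\<lambda>s. g0 \<otimes> s) ` St x \<subseteq> fib (?f g0)"
      using g0 x by (auto simp: St_def fib_def tw_mult)
  qed
  have cfib: "card (fib (?f g0)) = card (St x)" if g0: "g0 \<in> carrier G" for g0
    unfolding fibeq[OF g0]
    by (rule card_image) (auto simp: inj_on_def St_def g0)
  have "carrier G = (\<Union>c\<in>tcls G \<psi> x. fib c)"
    by (auto simp: fib_def tcls_def)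
  moreover have "card (\<Union>c\<in>tcls G \<psi> x. fib c) = (\<Sum>c\<in>tcls G \<psi> x. card (fib c))"
    by (rule card_UN_disjoint) (use fin in \<open>auto simp: fib_def tcls_def\<close>)
  ultimately have "card (carrier G) = (\<Sum>c\<in>tcls G \<psi> x. card (fib c))" by simp
  also have "\<dots> = (\<Sum>c\<in>tcls G \<psi> x. card (St x))"
    by (rule sum.cong) (auto simp: tcls_def cfib)
  finally show ?thesis by simp
qed

lemma fix_bound:
  assumes fin: "finite (carrier G)"
  shows "card {x \<in> carrier G. \<psi> x = x} \<le> card (reid_classes G \<psi>) ^ (2 ^ card (reid_classes G \<psi>))"
proof -
  let ?C = "reid_classes G \<psi>"
  let ?n = "card (carrier G)"
  define s where "s Cc = ?n div card Cc" for Cc :: "'a set"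
  have finC: "finite ?C" using fin by (simp add: reid_classes_tcls)
  have npos: "?n > 0" using fin card_0_eq by fastforce
  have sO: "s Cc * card Cc = ?n \<and> s Cc \<ge> 1" if CcC: "Cc \<in> ?C" for Cc
  proof -
    obtain x where x: "x \<in> carrier G" "Cc = tcls G \<psi> x" using CcC by (auto simp: reid_classes_tcls)
    have e: "?n = card Cc * card (St x)" using orbit_stab[OF fin x(1)] x by simp
    have "card Cc > 0" using e npos by (metis gr0I mult_is_0)
    hence "s Cc = card (St x)" using e by (simp add: s_def)
    thus ?thesis using e npos by (metis One_nat_def Suc_leI mult.commute nat_0_less_mult_iff)
  qed
  have sum1: "(\<Sum>Cc\<in>?C. 1 / real (s Cc)) = real 1 / real 1"
  proof -
    have "(\<Sum>Cc\<in>?C. 1 / real (s Cc)) = (\<Sum>Cc\<in>?C. real (card Cc) / real ?n)"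
    proof (rule sum.cong)
      fix Cc assume h: "Cc \<in> ?C"
      from sO[OF h] have e: "real (s Cc) * real (card Cc) = real ?n" by (metis of_nat_mult)
      from sO[OF h] have p: "real (s Cc) > 0" by simp
      show "1 / real (s Cc) = real (card Cc) / real ?n" using npos p e by (simp add: field_simps)
    qed simp
    also have "\<dots> = real (\<Sum>Cc\<in>?C. card Cc) / real ?n" by (simp add: sum_divide_distrib)
    also have "(\<Sum>Cc\<in>?C. card Cc) = ?n"
    proof -
      have "card (\<Union>?C) = sum card ?C"
        by (rule card_Union_disjoint)
          (use classes_disjoint classes_union fin in \<open>auto simp: pairwise_def disjnt_def intro: finite_subset\<close>)
      thus ?thesis using classes_union by simp
    qed
    finally show ?thesis using npos by simp
  qed
  have one: "\<one> \<in> carrier G" by simp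
  have "s (tcls G \<psi> \<one>) \<le> (card ?C * 1) ^ (2 ^ card ?C)"
    by (rule landau_aux[OF finC refl _ _ sum1]) (use sO one in \<open>auto simp: reid_classes_tcls\<close>)
  moreover have "s (tcls G \<psi> \<one>) = card (St \<one>)"
  proof -
    have e: "?n = card (tcls G \<psi> \<one>) * card (St \<one>)" using orbit_stab[OF fin one] .
    have "card (tcls G \<psi> \<one>) > 0" using e npos by (metis gr0I mult_is_0)
    thus ?thesis using e by (simp add: s_def)
  qed
  moreover have "St \<one> = {x \<in> carrier G. \<psi> x = x}"
    by (auto simp: St_def tw_def inv_solve_right')
  ultimately show ?thesis by simp
qed

end

lemma bij_kernel:
  assumes "\<And>x y. x \<in> D \<Longrightarrow> y \<in> D \<Longrightarrow> f x = f y \<longleftrightarrow> g x = g y"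
  shows "bij_betw (\<lambda>c. g (inv_into D f c)) (f ` D) (g ` D)"
proof (rule bij_betw_imageI)
  show "inj_on (\<lambda>c. g (inv_into D f c)) (f ` D)"
  proof (rule inj_onI)
    fix a b assume a: "a \<in> f ` D" and b: "b \<in> f ` D" and e: "g (inv_into D f a) = g (inv_into D f b)"
    have ia: "inv_into D f a \<in> D" "f (inv_into D f a) = a" using a by (auto intro: inv_into_into f_inv_into_f)
    have ib: "inv_into D f b \<in> D" "f (inv_into D f b) = b" using b by (auto intro: inv_into_into f_inv_into_f)
    show "a = b" using assms[OF ia(1) ib(1)] e ia ib by simp
  qed
  show "(\<lambda>c. g (inv_into D f c)) ` f ` D = g ` D"
  proof
    show "(\<lambda>c. g (inv_into D f c)) ` f ` D \<subseteq> g ` D"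
      by (auto intro: inv_into_into)
    show "g ` D \<subseteq> (\<lambda>c. g (inv_into D f c)) ` f ` D"
    proof
      fix z assume "z \<in> g ` D"
      then obtain x where x: "x \<in> D" "z = g x" by auto
      have i: "inv_into D f (f x) \<in> D" "f (inv_into D f (f x)) = f x" using x by (auto intro: inv_into_into f_inv_into_f)
      have "g (inv_into D f (f x)) = g x" using assms[OF i(1) x(1)] i(2) by simp
      thus "z \<in> (\<lambda>c. g (inv_into D f c)) ` f ` D" using x by force
    qed
  qed
qed

lemma card_kernel:
  assumes "\<And>x y. x \<in> D \<Longrightarrow> y \<in> D \<Longrightarrow> f x = f y \<longleftrightarrow> g x = g y"
  shows "card (f ` D) = card (g ` D)"
  by (rule bij_betw_same_card[OF bij_kernel[OF assms]])

lemma finite_kernel: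
  assumes "\<And>x y. x \<in> D \<Longrightarrow> y \<in> D \<Longrightarrow> f x = f y \<longleftrightarrow> g x = g y"
  shows "finite (f ` D) \<longleftrightarrow> finite (g ` D)"
  by (rule bij_betw_finite[OF bij_kernel[OF assms]])

lemma reid_classes_image:
  assumes G: "group G" and F: "group F" and pi: "\<pi> \<in> hom G F" and surj: "\<pi> ` carrier G = carrier F"
    and a: "\<alpha> \<in> hom G G" and p: "\<psi> \<in> hom F F"
    and comm: "\<And>g. g \<in> carrier G \<Longrightarrow> \<psi> (\<pi> g) = \<pi> (\<alpha> g)"
  shows "reid_classes F \<psi> = (\<lambda>C. \<pi> ` C) ` reid_classes G \<alpha>"
proof -
  interpret gh: group_hom G F \<pi> using G F pi by (simp add: group_hom_def group_hom_axioms_def)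
  have ac: "\<alpha> g \<in> carrier G" if "g \<in> carrier G" for g using a that by (auto simp: hom_def)
  have tc: "tcls F \<psi> (\<pi> x) = \<pi> ` tcls G \<alpha> x" if x: "x \<in> carrier G" for x
  proof -
    have "tcls F \<psi> (\<pi> x) = (\<lambda>g. tw F \<psi> (\<pi> g) (\<pi> x)) ` carrier G"
      unfolding tcls_def surj[symmetric] by (simp add: image_image)
    also have "\<dots> = (\<lambda>g. \<pi> (tw G \<alpha> g x)) ` carrier G"
      by (rule image_cong) (auto simp: tw_def comm x ac gh.hom_mult)
    also have "\<dots> = \<pi> ` tcls G \<alpha> x" unfolding tcls_def by (simp add: image_image)
    finally show ?thesis .
  qed
  have "reid_classes F \<psi> = tcls F \<psi> ` \<pi> ` carrier G" unfolding reid_classes_tcls surj ..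
  also have "\<dots> = (\<lambda>x. \<pi> ` tcls G \<alpha> x) ` carrier G" by (auto simp: image_image tc)
  also have "\<dots> = (\<lambda>C. \<pi> ` C) ` reid_classes G \<alpha>" unfolding reid_classes_tcls by (simp add: image_image)
  finally show ?thesis .
qed

lemma fix_image_bound:
  assumes G: "group G" and F: "group F" and pi: "\<pi> \<in> hom G F" and surj: "\<pi> ` carrier G = carrier F"
    and a: "\<alpha> \<in> hom G G" and p: "\<psi> \<in> hom F F"
    and comm: "\<And>g. g \<in> carrier G \<Longrightarrow> \<psi> (\<pi> g) = \<pi> (\<alpha> g)"
    and finF: "finite (carrier F)" and finR: "finite (reid_classes G \<alpha>)"
  shows "card (\<pi> ` {x \<in> carrier G. \<alpha> x = x}) \<le> card (reid_classes G \<alpha>) ^ (2 ^ card (reid_classes G \<alpha>))"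
proof -
  interpret tF: twist F \<psi> using F p by (simp add: twist_def twist_axioms_def)
  let ?r = "card (reid_classes G \<alpha>)"
  let ?r' = "card (reid_classes F \<psi>)"
  have rr: "?r' \<le> ?r"
  proof -
    have "reid_classes F \<psi> = (\<lambda>C. \<pi> ` C) ` reid_classes G \<alpha>" by (rule reid_classes_image[OF assms(1-7)])
    thus ?thesis using card_image_le[OF finR] by simp
  qed
  have r1: "?r \<ge> 1"
  proof -
    have "reid_classes G \<alpha> \<noteq> {}" by (simp add: reid_classes_tcls group.is_monoid[OF G] monoid.one_closed)
      (metis G empty_iff group.is_monoid monoid.one_closed)
    thus ?thesis using finR by (simp add: Suc_le_eq card_gt_0_iff)
  qed
  have sub: "\<pi> ` {x \<in> carrier G. \<alpha> x = x} \<subseteq> {y \<in> carrier F. \<psi> y = y}"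
    using surj comm by auto
  have "card (\<pi> ` {x \<in> carrier G. \<alpha> x = x}) \<le> card {y \<in> carrier F. \<psi> y = y}"
    by (rule card_mono[OF _ sub]) (use finF in simp)
  also have "\<dots> \<le> ?r' ^ (2 ^ ?r')" by (rule tF.fix_bound[OF finF])
  also have "\<dots> \<le> ?r ^ (2 ^ ?r')" by (rule power_mono[OF rr]) simp
  also have "\<dots> \<le> ?r ^ (2 ^ ?r)" by (rule power_increasing) (use rr r1 in auto)
  finally show ?thesis .
qed

locale cact = group G for G (structure) +
  fixes N b m
  assumes sub: "subgroup N G" and bij: "bij_betw b (rcosets N) {..<m}"
begin

definition a where "a i g = b (inv_into (rcosets N) b i #> g)"

lemma R_carrier: "C \<in> rcosets N \<Longrightarrow> C \<subseteq> carrier G"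
  using subgroup.rcosets_carrier[OF sub is_group] by blast

lemma R_mult: "C \<in> rcosets N \<Longrightarrow> g \<in> carrier G \<Longrightarrow> C #> g \<in> rcosets N"
proof -
  assume C: "C \<in> rcosets N" and g: "g \<in> carrier G"
  then obtain x where x: "x \<in> carrier G" "C = N #> x" by (auto simp: RCOSETS_def)
  have "C #> g = N #> (x \<otimes> g)" using x g sub by (simp add: coset_mult_assoc subgroup.subset)
  thus ?thesis using x g sub by (simp add: rcosetsI subgroup.subset)
qed

lemma inv_in: "i < m \<Longrightarrow> inv_into (rcosets N) b i \<in> rcosets N"
  using bij by (metis bij_betw_def inv_into_into lessThan_iff)

lemma b_in: "C \<in> rcosets N \<Longrightarrow> b C < m"
  using bij by (auto simp: bij_betw_def)

lemma a_lt: "i < m \<Longrightarrow> g \<in> carrier G \<Longrightarrow> a i g < m"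
  unfolding a_def by (intro b_in R_mult inv_in)

lemma inv_b: "C \<in> rcosets N \<Longrightarrow> inv_into (rcosets N) b (b C) = C"
  using bij by (rule bij_betw_inv_into_left)

lemma a_mult: "i < m \<Longrightarrow> g \<in> carrier G \<Longrightarrow> h \<in> carrier G \<Longrightarrow> a i (g \<otimes> h) = a (a i g) h"
proof -
  assume i: "i < m" and g: "g \<in> carrier G" and h: "h \<in> carrier G"
  let ?C = "inv_into (rcosets N) b i"
  have C: "?C \<in> rcosets N" using inv_in[OF i] .
  have "a (a i g) h = b ((?C #> g) #> h)" unfolding a_def by (simp add: inv_b R_mult C g)
  also have "(?C #> g) #> h = ?C #> (g \<otimes> h)" using R_carrier[OF C] g h by (simp add: coset_mult_assoc)
  finally show ?thesis by (simp add: a_def)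
qed

lemma a_one: "i < m \<Longrightarrow> a i \<one> = i"
  unfolding a_def using inv_in R_carrier bij
  by (metis bij_betw_inv_into_right coset_mult_one lessThan_iff)

lemma a_inj: "i < m \<Longrightarrow> j < m \<Longrightarrow> h \<in> carrier G \<Longrightarrow> a i h = a j h \<Longrightarrow> i = j"
proof -
  assume i: "i < m" and j: "j < m" and h: "h \<in> carrier G" and e: "a i h = a j h"
  have "i = a (a i h) (inv h)" using a_mult[OF i h inv_closed[OF h]] a_one[OF i] h by simp
  also have "\<dots> = a (a j h) (inv h)" using e by simp
  also have "\<dots> = j" using a_mult[OF j h inv_closed[OF h]] a_one[OF j] h by simp
  finally show ?thesis .
qed

lemma N_in: "N \<in> rcosets N" using subgroup.subgroup_in_rcosets[OF sub is_group] .

lemma a_base: "g \<in> carrier G \<Longrightarrow> a (b N) g = b N \<longleftrightarrow> g \<in> N"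
proof -
  assume g: "g \<in> carrier G"
  have "a (b N) g = b (N #> g)" by (simp add: a_def inv_b N_in)
  moreover have "b (N #> g) = b N \<longleftrightarrow> N #> g = N"
    using bij R_mult[OF N_in g] N_in by (auto simp: bij_betw_def inj_on_def)
  moreover have "N #> g = N \<longleftrightarrow> g \<in> N"
    using g sub by (metis coset_join2 rcos_self)
  ultimately show ?thesis by simp
qed

end

lemma cact_agree:
  assumes c1: "cact G N1 b1 m" and c2: "cact G N2 b2 m" and S: "S \<subseteq> carrier G"
    and agree: "\<And>s i. s \<in> S \<Longrightarrow> i < m \<Longrightarrow> cact.a G N1 b1 i s = cact.a G N2 b2 i s"
    and g: "g \<in> generate G S"
  shows "\<forall>i<m. cact.a G N1 b1 i g = cact.a G N2 b2 i g"
  using g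
proof (induction rule: generate.induct)
  case one
  then show ?case using cact.a_one[OF c1] cact.a_one[OF c2] by simp
next
  case (incl h)
  then show ?case using agree by simp
next
  case (inv h)
  interpret C1: cact G N1 b1 m by fact
  interpret C2: cact G N2 b2 m by fact
  have hc: "h \<in> carrier G" using inv S by auto
  show ?case
  proof (intro allI impI)
    fix i assume i: "i < m"
    let ?k1 = "C1.a i (inv\<^bsub>G\<^esub> h)" and ?k2 = "C2.a i (inv\<^bsub>G\<^esub> h)"
    have k1: "?k1 < m" using C1.a_lt i hc by simp
    have k2: "?k2 < m" using C2.a_lt i hc by simp
    have "C1.a ?k1 h = i" using C1.a_mult[OF i C1.inv_closed[OF hc] hc] C1.a_one[OF i] hc by simp
    moreover have "C2.a ?k2 h = i" using C2.a_mult[OF i C1.inv_closed[OF hc] hc] C2.a_one[OF i] hc by simp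
    moreover have "C1.a ?k2 h = C2.a ?k2 h" using agree[OF inv(1) k2] .
    ultimately have "C1.a ?k1 h = C1.a ?k2 h" by simp
    thus "?k1 = ?k2" using C1.a_inj[OF k1 k2 hc] by simp
  qed
next
  case (eng h1 h2)
  interpret C1: cact G N1 b1 m by fact
  interpret C2: cact G N2 b2 m by fact
  have hc: "h1 \<in> carrier G" "h2 \<in> carrier G"
    using eng.hyps C1.generate_in_carrier S by auto
  show ?case
  proof (intro allI impI)
    fix i assume i: "i < m"
    have "C1.a i (h1 \<otimes>\<^bsub>G\<^esub> h2) = C1.a (C1.a i h1) h2" by (rule C1.a_mult[OF i hc])
    also have "\<dots> = C1.a (C2.a i h1) h2" using eng.IH(1) i by simp
    also have "\<dots> = C2.a (C2.a i h1) h2" using eng.IH(2) C2.a_lt[OF i hc(1)] by simp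
    also have "\<dots> = C2.a i (h1 \<otimes>\<^bsub>G\<^esub> h2)" by (rule C2.a_mult[OF i hc, symmetric])
    finally show "C1.a i (h1 \<otimes>\<^bsub>G\<^esub> h2) = C2.a i (h1 \<otimes>\<^bsub>G\<^esub> h2)" .
  qed
qed

definition NS :: "('a, 'c) monoid_scheme \<Rightarrow> nat \<Rightarrow> 'a set set" where
  "NS G n = {N. N \<lhd> G \<and> finite (rcosets\<^bsub>G\<^esub> N) \<and> card (rcosets\<^bsub>G\<^esub> N) \<le> n}"

lemma (in group) finite_NS:
  assumes S: "finite S" "S \<subseteq> carrier G" "generate G S = carrier G"
  shows "finite (NS G n)"
proof -
  define m where "m N = card (rcosets N)" for N
  define b where "b N = (SOME f. bij_betw f (rcosets N) {..<m N})" for N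
  have cN: "cact G N (b N) (m N)" if N: "N \<in> NS G n" for N
  proof -
    have fin: "finite (rcosets N)" using N by (simp add: NS_def)
    have "\<exists>f. bij_betw f (rcosets N) {..<m N}"
      using ex_bij_betw_finite_nat[OF fin] by (simp add: m_def atLeast0LessThan)
    hence "bij_betw (b N) (rcosets N) {..<m N}" unfolding b_def by (rule someI_ex)
    moreover have "subgroup N G" using N by (simp add: NS_def normal_def)
    ultimately show ?thesis by (simp add: cact_def cact_axioms_def is_group)
  qed
  define code where "code N = (m N, b N N, restrict (\<lambda>(s, i). cact.a G N (b N) i s) (S \<times> {..<m N}))" for N
  have inj: "inj_on code (NS G n)"
  proof (rule inj_onI)
    fix N1 N2 assume N1: "N1 \<in> NS G n" and N2: "N2 \<in> NS G n" and e: "code N1 = code N2"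
    have mm: "m N1 = m N2" using e by (simp add: code_def)
    have bb: "b N1 N1 = b N2 N2" using e by (simp add: code_def)
    have rr: "restrict (\<lambda>(s, i). cact.a G N1 (b N1) i s) (S \<times> {..<m N1}) =
              restrict (\<lambda>(s, i). cact.a G N2 (b N2) i s) (S \<times> {..<m N1})"
      using e mm by (simp add: code_def)
    have c1: "cact G N1 (b N1) (m N1)" using cN[OF N1] .
    have c2: "cact G N2 (b N2) (m N1)" using cN[OF N2] mm by simp
    have ag: "cact.a G N1 (b N1) i s = cact.a G N2 (b N2) i s" if "s \<in> S" "i < m N1" for s i
      using fun_cong[OF rr, of "(s, i)"] that by simp
    have all: "\<forall>i<m N1. cact.a G N1 (b N1) i g = cact.a G N2 (b N2) i g" if g: "g \<in> carrier G" for g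
      by (rule cact_agree[OF c1 c2 S(2) ag]) (use g S(3) in auto)
    have b1: "b N1 N1 < m N1" using cact.b_in[OF c1 cact.N_in[OF c1]] .
    show "N1 = N2"
    proof
      show "N1 \<subseteq> N2"
      proof
        fix g assume gN: "g \<in> N1"
        have g: "g \<in> carrier G" using gN N1 by (auto simp: NS_def normal_def subgroup_def)
        have "cact.a G N1 (b N1) (b N1 N1) g = b N1 N1" using cact.a_base[OF c1 g] gN by simp
        hence "cact.a G N2 (b N2) (b N2 N2) g = b N2 N2" using all[OF g] b1 bb by simp
        thus "g \<in> N2" using cact.a_base[OF c2 g] by simp
      qed
      show "N2 \<subseteq> N1"
      proof
        fix g assume gN: "g \<in> N2"
        have g: "g \<in> carrier G" using gN N2 by (auto simp: NS_def normal_def subgroup_def)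
        have "cact.a G N2 (b N2) (b N2 N2) g = b N2 N2" using cact.a_base[OF c2 g] gN by simp
        hence "cact.a G N1 (b N1) (b N1 N1) g = b N1 N1" using all[OF g] b1 bb by simp
        thus "g \<in> N1" using cact.a_base[OF c1 g] by simp
      qed
    qed
  qed
  define B where "B = (\<Union>k\<in>{..n}. {k} \<times> {..<n} \<times> (PiE (S \<times> {..<k}) (\<lambda>_. {..<k})))"
  have "code ` NS G n \<subseteq> B"
  proof
    fix c assume "c \<in> code ` NS G n"
    then obtain N where N: "N \<in> NS G n" "c = code N" by auto
    have c: "cact G N (b N) (m N)" using cN[OF N(1)] .
    have mn: "m N \<le> n" using N(1) by (simp add: NS_def m_def)
    have "b N N < m N" using cact.b_in[OF c cact.N_in[OF c]] .
    moreover have "restrict (\<lambda>(s, i). cact.a G N (b N) i s) (S \<times> {..<m N}) \<in> PiE (S \<times> {..<m N}) (\<lambda>_. {..<m N})"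
      using cact.a_lt[OF c] S(2) by auto
    ultimately show "c \<in> B" using mn N(2) unfolding B_def code_def by auto
  qed
  moreover have "finite B" unfolding B_def using S(1) by (auto intro!: finite_PiE)
  ultimately show ?thesis using inj inj_on_finite by blast
qed

context group begin

lemma rcos_eq_iff: "subgroup H G \<Longrightarrow> x \<in> carrier G \<Longrightarrow> y \<in> carrier G \<Longrightarrow> H #> x = H #> y \<longleftrightarrow> x \<otimes> inv y \<in> H"
  by (metis repr_independence rcos_self subgroup.rcos_module[OF _ is_group])

lemma Inter_normal:
  assumes "\<A> \<noteq> {}" "\<And>N. N \<in> \<A> \<Longrightarrow> N \<lhd> G"
  shows "\<Inter>\<A> \<lhd> G"
proof (rule normal_invI)
  show "subgroup (\<Inter>\<A>) G" by (rule subgroups_Inter) (use assms in \<open>auto simp: normal_def\<close>)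
  fix x h assume "x \<in> carrier G" "h \<in> \<Inter>\<A>"
  thus "x \<otimes> h \<otimes> inv x \<in> \<Inter>\<A>" using assms normal_invE(2) by blast
qed

lemma Inter_fin:
  assumes "finite \<A>" "\<A> \<noteq> {}" "\<And>N. N \<in> \<A> \<Longrightarrow> N \<lhd> G \<and> finite (rcosets N)"
  shows "finite (rcosets (\<Inter>\<A>))"
proof -
  have subA: "subgroup N G" if "N \<in> \<A>" for N using assms(3)[OF that] by (simp add: normal_def)
  have sub: "subgroup (\<Inter>\<A>) G" by (rule subgroups_Inter) (use subA assms(2) in auto)
  have eq: "rcosets (\<Inter>\<A>) = (\<lambda>x. \<Inter>\<A> #> x) ` carrier G" by (auto simp: RCOSETS_def)
  have k: "(\<Inter>\<A> #> x = \<Inter>\<A> #> y) \<longleftrightarrow> ((\<lambda>N\<in>\<A>. N #> x) = (\<lambda>N\<in>\<A>. N #> y))"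
    if "x \<in> carrier G" "y \<in> carrier G" for x y
  proof -
    have "(\<Inter>\<A> #> x = \<Inter>\<A> #> y) \<longleftrightarrow> (\<forall>N\<in>\<A>. x \<otimes> inv y \<in> N)"
      using rcos_eq_iff[OF sub that] by simp
    also have "\<dots> \<longleftrightarrow> (\<forall>N\<in>\<A>. N #> x = N #> y)" using rcos_eq_iff[OF subA that] by simp
    also have "\<dots> \<longleftrightarrow> ((\<lambda>N\<in>\<A>. N #> x) = (\<lambda>N\<in>\<A>. N #> y))"
      by (auto simp: fun_eq_iff restrict_def split: if_splits)
    finally show ?thesis .
  qed
  have "finite ((\<lambda>x. \<lambda>N\<in>\<A>. N #> x) ` carrier G)"
  proof (rule finite_subset)
    show "(\<lambda>x. \<lambda>N\<in>\<A>. N #> x) ` carrier G \<subseteq> PiE \<A> (\<lambda>N. rcosets N)"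
      by (auto simp: RCOSETS_def)
    show "finite (PiE \<A> (\<lambda>N. rcosets N))" using assms by (intro finite_PiE) auto
  qed
  thus ?thesis unfolding eq using finite_kernel[of "carrier G" "\<lambda>x. \<Inter>\<A> #> x" "\<lambda>x. \<lambda>N\<in>\<A>. N #> x"] k by blast
qed

lemma auto_image_coset:
  assumes "\<phi> \<in> hom G G" "N \<subseteq> carrier G" "x \<in> carrier G"
  shows "\<phi> ` (N #> x) = (\<phi> ` N) #> \<phi> x"
proof -
  have "\<phi> ` (N #> x) = (\<lambda>h. \<phi> (h \<otimes> x)) ` N" by (auto simp: r_coset_def)
  also have "\<dots> = (\<lambda>h. \<phi> h \<otimes> \<phi> x) ` N"
    by (rule image_cong) (use assms in \<open>auto simp: hom_mult\<close>)
  also have "\<dots> = (\<phi> ` N) #> \<phi> x" by (auto simp: r_coset_def)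
  finally show ?thesis .
qed

lemma auto_NS:
  assumes phi: "\<phi> \<in> auto G" and N: "N \<in> NS G n"
  shows "\<phi> ` N \<in> NS G n"
proof -
  have hom: "\<phi> \<in> hom G G" and bij: "bij_betw \<phi> (carrier G) (carrier G)"
    using phi by (auto simp: auto_def Bij_def)
  have gh: "group_hom G G \<phi>" using hom by (simp add: group_hom_def group_hom_axioms_def is_group)
  have surj: "\<phi> ` carrier G = carrier G" using bij by (simp add: bij_betw_def)
  have nN: "N \<lhd> G" using N by (simp add: NS_def)
  have Nc: "N \<subseteq> carrier G" using nN by (simp add: normal_def subgroup_def)
  have norm: "\<phi> ` N \<lhd> G" by (rule normal.surj_hom_normal_subgroup[OF nN gh surj])
  have rc: "rcosets (\<phi> ` N) = (\<lambda>C. \<phi> ` C) ` (rcosets N)"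
  proof -
    have "rcosets (\<phi> ` N) = (\<lambda>x. (\<phi> ` N) #> x) ` (\<phi> ` carrier G)" by (auto simp: surj RCOSETS_def)
    also have "\<dots> = (\<lambda>x. \<phi> ` (N #> x)) ` carrier G"
      by (auto simp: image_image auto_image_coset[OF hom Nc])
    also have "\<dots> = (\<lambda>C. \<phi> ` C) ` (rcosets N)" by (auto simp: RCOSETS_def)
    finally show ?thesis .
  qed
  have inj: "inj_on (\<lambda>C. \<phi> ` C) (rcosets N)"
  proof (rule inj_on_subset[OF inj_on_image[of \<phi> "Pow (carrier G)"]])
    show "inj_on \<phi> (\<Union>(Pow (carrier G)))" using bij by (simp add: bij_betw_def)
    show "rcosets N \<subseteq> Pow (carrier G)"
      using subgroup.rcosets_carrier[OF normal.axioms(1)[OF nN] is_group] by auto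
  qed
  have "card (rcosets (\<phi> ` N)) = card (rcosets N)" unfolding rc by (rule card_image[OF inj])
  moreover have "finite (rcosets (\<phi> ` N))" unfolding rc using N by (simp add: NS_def)
  ultimately show ?thesis using N norm by (simp add: NS_def)
qed

lemma invariant_subgroup:
  assumes S: "finite S" "S \<subseteq> carrier G" "generate G S = carrier G"
    and phi: "\<phi> \<in> auto G"
    and A: "finite \<A>" "\<A> \<noteq> {}" "\<And>N. N \<in> \<A> \<Longrightarrow> N \<lhd> G \<and> finite (rcosets N)"
  shows "\<exists>K. K \<lhd> G \<and> finite (rcosets K) \<and> \<phi> ` K = K \<and> K \<subseteq> \<Inter>\<A>"
proof -
  let ?L = "\<Inter>\<A>"
  let ?n = "card (rcosets ?L)"
  have L: "?L \<in> NS G ?n" using Inter_normal[OF A(2)] Inter_fin[OF A] A(3) by (simp add: NS_def)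
  let ?K = "\<Inter>(NS G ?n)"
  have finNS: "finite (NS G ?n)" by (rule finite_NS[OF S])
  have ne: "NS G ?n \<noteq> {}" using L by auto
  have NSp: "N \<lhd> G \<and> finite (rcosets N)" if "N \<in> NS G ?n" for N using that by (simp add: NS_def)
  have bij: "bij_betw \<phi> (carrier G) (carrier G)" using phi by (auto simp: auto_def Bij_def)
  have Nsub: "N \<subseteq> carrier G" if "N \<in> NS G ?n" for N
    using NSp[OF that] by (simp add: normal_def subgroup_def)
  have perm: "(\<lambda>N. \<phi> ` N) ` NS G ?n = NS G ?n"
  proof (rule endo_inj_surj[OF finNS])
    show "(\<lambda>N. \<phi> ` N) ` NS G ?n \<subseteq> NS G ?n" using auto_NS[OF phi] by auto
    show "inj_on (\<lambda>N. \<phi> ` N) (NS G ?n)"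
    proof (rule inj_on_subset[OF inj_on_image[of \<phi> "Pow (carrier G)"]])
      show "inj_on \<phi> (\<Union>(Pow (carrier G)))" using bij by (simp add: bij_betw_def)
      show "NS G ?n \<subseteq> Pow (carrier G)" using Nsub by auto
    qed
  qed
  have "\<phi> ` ?K = (\<Inter>N\<in>NS G ?n. \<phi> ` N)"
    using image_INT[of \<phi> "carrier G" "NS G ?n" "\<lambda>N. N" ?L] bij L Nsub by (simp add: bij_betw_def)
  also have "\<dots> = ?K" using perm by simp
  finally have inv: "\<phi> ` ?K = ?K" .
  have "?K \<lhd> G" by (rule Inter_normal[OF ne]) (use NSp in auto)
  moreover have "finite (rcosets ?K)" by (rule Inter_fin[OF finNS ne NSp])
  moreover have "?K \<subseteq> ?L" using L by auto
  ultimately show ?thesis using inv by blast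
qed

end

lemma (in group) rcosets_carrier_self: "finite (rcosets (carrier G))"
proof -
  have "rcosets (carrier G) \<subseteq> {carrier G}"
    by (auto simp: RCOSETS_def coset_join2[OF _ subgroup_self])
  thus ?thesis by (rule finite_subset) simp
qed

lemma (in group) key_fix:
  assumes fg: "fin_gen_group G" and tf: "torsion_free G" and rf: "residually_finite G"
    and a: "\<alpha> \<in> auto G" and fr: "finite (reid_classes G \<alpha>)" and x: "x \<in> carrier G" "\<alpha> x = x"
  shows "x = \<one>"
proof (rule ccontr)
  assume x1: "x \<noteq> \<one>"
  define r where "r = card (reid_classes G \<alpha>)"
  define M where "M = r ^ (2 ^ r)"
  obtain S where S: "finite S" "S \<subseteq> carrier G" "generate G S = carrier G"
    using fg by (auto simp: fin_gen_group_def)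
  have ahom: "\<alpha> \<in> hom G G" using a by (simp add: auto_def)
  have pw: "x [^] j \<noteq> \<one>" if "j \<ge> 1" for j :: nat
    using tf x x1 that unfolding torsion_free_def by auto
  have "\<forall>j\<in>{1..M}. \<exists>N. N \<lhd> G \<and> finite (rcosets N) \<and> x [^] j \<notin> N"
    using rf pw x unfolding residually_finite_def by auto
  then obtain N where N: "\<forall>j\<in>{1..M}. N j \<lhd> G \<and> finite (rcosets (N j)) \<and> x [^] j \<notin> N j"
    by (metis bchoice)
  define A where "A = insert (carrier G) (N ` {1..M})"
  have Ap: "B \<lhd> G \<and> finite (rcosets B)" if "B \<in> A" for B
    using that N rcosets_carrier_self normal_invI[OF subgroup_self] by (auto simp: A_def)
  obtain K where K: "K \<lhd> G" "finite (rcosets K)" "\<alpha> ` K = K" "K \<subseteq> \<Inter>A"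
    using invariant_subgroup[OF S a, of A] Ap by (auto simp: A_def)
  interpret nK: normal K G by (rule K(1))
  have Kc: "K \<subseteq> carrier G" by (rule nK.subset)
  let ?F = "G Mod K"
  let ?\<pi> = "\<lambda>g. K #> g"
  let ?\<psi> = "\<lambda>C. \<alpha> ` C"
  have Fg: "group ?F" by (rule nK.factorgroup_is_group)
  have pihom: "?\<pi> \<in> hom G ?F" by (rule nK.r_coset_hom_Mod)
  have pisurj: "?\<pi> ` carrier G = carrier ?F" by (simp add: carrier_FactGroup)
  have psi_pi: "?\<psi> (?\<pi> g) = ?\<pi> (\<alpha> g)" if "g \<in> carrier G" for g
    using auto_image_coset[OF ahom Kc that] K(3) by simp
  have ac: "\<alpha> g \<in> carrier G" if "g \<in> carrier G" for g using ahom that by (simp add: hom_def Pi_def)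
  have psihom: "?\<psi> \<in> hom ?F ?F"
  proof (rule homI)
    fix C assume "C \<in> carrier ?F"
    then obtain g where g: "g \<in> carrier G" "C = K #> g" by (auto simp: carrier_FactGroup)
    show "?\<psi> C \<in> carrier ?F" using g psi_pi ac by (auto simp: carrier_FactGroup)
  next
    fix C D assume "C \<in> carrier ?F" "D \<in> carrier ?F"
    then obtain g h where g: "g \<in> carrier G" "C = K #> g" and h: "h \<in> carrier G" "D = K #> h"
      by (auto simp: carrier_FactGroup)
    have "C \<otimes>\<^bsub>?F\<^esub> D = K #> (g \<otimes> h)" using g h by (simp add: nK.rcos_sum)
    hence "?\<psi> (C \<otimes>\<^bsub>?F\<^esub> D) = K #> (\<alpha> g \<otimes> \<alpha> h)"
      using psi_pi g h ahom by (simp add: hom_mult)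
    also have "\<dots> = ?\<psi> C \<otimes>\<^bsub>?F\<^esub> ?\<psi> D" using g h psi_pi ac by (simp add: nK.rcos_sum)
    finally show "?\<psi> (C \<otimes>\<^bsub>?F\<^esub> D) = ?\<psi> C \<otimes>\<^bsub>?F\<^esub> ?\<psi> D" .
  qed
  have finF: "finite (carrier ?F)" using K(2) by (simp add: FactGroup_def)
  have bound: "card (?\<pi> ` {y \<in> carrier G. \<alpha> y = y}) \<le> M"
    unfolding M_def r_def
    by (rule fix_image_bound[OF is_group Fg pihom pisurj ahom psihom psi_pi finF fr])
  have powfix: "x [^] j \<in> {y \<in> carrier G. \<alpha> y = y}" for j :: nat
    using x hom_nat_pow[OF ahom x(1) is_group is_group, of j] by simp
  have inj: "inj_on (\<lambda>j. ?\<pi> (x [^] j)) {..M}"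
  proof (rule inj_onI)
    have main: "i = j" if ij: "i \<le> j" "j \<le> M" "K #> x [^] i = K #> x [^] j" for i j :: nat
    proof (rule ccontr)
      assume "i \<noteq> j"
      hence lt: "1 \<le> j - i" "j - i \<le> M" using ij by auto
      have "x [^] j \<otimes> inv (x [^] i) \<in> K"
        using ij(3) rcos_eq_iff[OF nK.subgroup_axioms] x(1) by (metis nat_pow_closed)
      moreover have "x [^] j \<otimes> inv (x [^] i) = x [^] (j - i)"
        using inv_solve_right[of "x [^] (j - i)" "x [^] j" "x [^] i"] x(1) nat_pow_mult[OF x(1), of "j - i" i] ij(1)
        by simp
      ultimately have "x [^] (j - i) \<in> K" by simp
      hence "x [^] (j - i) \<in> N (j - i)" using K(4) lt by (auto simp: A_def)
      thus False using N lt by auto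
    qed
    fix i j assume "i \<in> {..M}" "j \<in> {..M}" "K #> x [^] i = K #> x [^] j"
    thus "i = j" using main[of i j] main[of j i] by (cases "i \<le> j") auto
  qed
  have "card ((\<lambda>j. ?\<pi> (x [^] j)) ` {..M}) = Suc M" using card_image[OF inj] by simp
  moreover have "(\<lambda>j. ?\<pi> (x [^] j)) ` {..M} \<subseteq> ?\<pi> ` {y \<in> carrier G. \<alpha> y = y}"
    using powfix by blast
  moreover have "finite (?\<pi> ` {y \<in> carrier G. \<alpha> y = y})"
    using finF pisurj by (metis (no_types, lifting) finite_subset image_mono mem_Collect_eq subsetI)
  ultimately have "Suc M \<le> card (?\<pi> ` {y \<in> carrier G. \<alpha> y = y})" by (metis card_mono)
  thus False using bound by simp
qed

lemma (in group) key_twisted: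
  assumes fg: "fin_gen_group G" and tf: "torsion_free G" and rf: "residually_finite G"
    and a: "\<alpha> \<in> auto G" and fr: "finite (reid_classes G \<alpha>)"
    and g: "g \<in> carrier G" and x: "x \<in> carrier G" and e: "x \<otimes> g \<otimes> inv (\<alpha> x) = g"
  shows "x = \<one>"
proof -
  have ahom: "\<alpha> \<in> hom G G" and abij: "bij_betw \<alpha> (carrier G) (carrier G)"
    using a by (auto simp: auto_def Bij_def)
  have ac: "\<alpha> y \<in> carrier G" if "y \<in> carrier G" for y using ahom that by (simp add: hom_def Pi_def)
  define \<alpha>' where "\<alpha>' = (\<lambda>y\<in>carrier G. g \<otimes> \<alpha> y \<otimes> inv g)"
  have a'hom: "\<alpha>' \<in> hom G G"
  proof (rule homI)
    fix y assume "y \<in> carrier G" thus "\<alpha>' y \<in> carrier G" using g ac by (simp add: \<alpha>'_def)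
  next
    fix y z assume y: "y \<in> carrier G" and z: "z \<in> carrier G"
    have "\<alpha>' (y \<otimes> z) = g \<otimes> (\<alpha> y \<otimes> \<alpha> z) \<otimes> inv g" using y z ahom by (simp add: \<alpha>'_def hom_mult)
    also have "\<dots> = (g \<otimes> \<alpha> y \<otimes> inv g) \<otimes> (g \<otimes> \<alpha> z \<otimes> inv g)"
      using y z g ac by (simp add: m_assoc m_assoc[symmetric, of "inv g" g])
    finally show "\<alpha>' (y \<otimes> z) = \<alpha>' y \<otimes> \<alpha>' z" using y z by (simp add: \<alpha>'_def)
  qed
  have a'bij: "bij_betw \<alpha>' (carrier G) (carrier G)"
  proof (rule bij_betw_imageI)
    show "inj_on \<alpha>' (carrier G)"
    proof (rule inj_onI)
      fix y z assume y: "y \<in> carrier G" and z: "z \<in> carrier G" and e: "\<alpha>' y = \<alpha>' z"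
      hence "g \<otimes> \<alpha> y \<otimes> inv g = g \<otimes> \<alpha> z \<otimes> inv g" by (simp add: \<alpha>'_def)
      hence "\<alpha> y = \<alpha> z" using y z g ac by (simp add: m_assoc)
      thus "y = z" using abij y z by (auto simp: bij_betw_def inj_on_def)
    qed
    show "\<alpha>' ` carrier G = carrier G"
    proof
      show "\<alpha>' ` carrier G \<subseteq> carrier G" using a'hom by (auto simp: hom_def)
      show "carrier G \<subseteq> \<alpha>' ` carrier G"
      proof
        fix z assume z: "z \<in> carrier G"
        have "inv g \<otimes> z \<otimes> g \<in> \<alpha> ` carrier G" using abij z g by (simp add: bij_betw_def)
        then obtain y where y: "y \<in> carrier G" "\<alpha> y = inv g \<otimes> z \<otimes> g" by auto
        have "\<alpha>' y = g \<otimes> (inv g \<otimes> z \<otimes> g) \<otimes> inv g" using y by (simp add: \<alpha>'_def)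
        also have "\<dots> = z" using g z by (simp add: m_assoc[symmetric]) (simp add: m_assoc)
        finally show "z \<in> \<alpha>' ` carrier G" using y by force
      qed
    qed
  qed
  have a'auto: "\<alpha>' \<in> auto G" using a'hom a'bij by (simp add: auto_def Bij_def \<alpha>'_def)
  have tcl: "tcls G \<alpha>' y = tcls G \<alpha> (y \<otimes> g) #> inv g" if y: "y \<in> carrier G" for y
  proof -
    have "tcls G \<alpha>' y = (\<lambda>z. tw G \<alpha> z (y \<otimes> g) \<otimes> inv g) ` carrier G"
      unfolding tcls_def proof (rule image_cong[OF refl])
      fix z assume z: "z \<in> carrier G"
      show "tw G \<alpha>' z y = tw G \<alpha> z (y \<otimes> g) \<otimes> inv g"
        using z y g ac by (simp add: tw_def \<alpha>'_def inv_mult_group m_assoc)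
    qed
    also have "\<dots> = tcls G \<alpha> (y \<otimes> g) #> inv g"
      by (auto simp: tcls_def r_coset_def)
    finally show ?thesis .
  qed
  have "reid_classes G \<alpha>' \<subseteq> (\<lambda>C. C #> inv g) ` reid_classes G \<alpha>"
    using tcl g by (auto simp: reid_classes_tcls)
  hence fr': "finite (reid_classes G \<alpha>')" using fr by (meson finite_imageI finite_subset)
  have "x \<otimes> g = g \<otimes> \<alpha> x" using inv_solve_right'[of g "x \<otimes> g" "\<alpha> x"] e x g ac by simp
  hence "x = g \<otimes> \<alpha> x \<otimes> inv g" using inv_solve_right[of x "g \<otimes> \<alpha> x" g] x g ac by simp
  hence "\<alpha>' x = x" using x by (simp add: \<alpha>'_def)
  thus ?thesis by (rule key_fix[OF fg tf rf a'auto fr' x])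
qed

lemma count:
  assumes G: "group G" and H: "group H"
    and a: "\<alpha> \<in> hom G G" and b: "\<beta> \<in> hom H H" and p: "\<phi> \<in> hom (G \<times>\<times> H) (G \<times>\<times> H)"
    and dc: "\<And>g. g \<in> carrier G \<Longrightarrow> \<delta> g \<in> carrier H" and d1: "\<delta> \<one>\<^bsub>G\<^esub> = \<one>\<^bsub>H\<^esub>"
    and form: "\<And>g h. g \<in> carrier G \<Longrightarrow> h \<in> carrier H \<Longrightarrow> \<phi> (g, h) = (\<alpha> g, \<delta> g \<otimes>\<^bsub>H\<^esub> \<beta> h)"
    and fixp: "finite (reid_classes G \<alpha>) \<Longrightarrow> (\<And>g x. g \<in> carrier G \<Longrightarrow> x \<in> carrier G \<Longrightarrow>
                 x \<otimes>\<^bsub>G\<^esub> g \<otimes>\<^bsub>G\<^esub> inv\<^bsub>G\<^esub> (\<alpha> x) = g \<Longrightarrow> x = \<one>\<^bsub>G\<^esub>)"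
  shows "reidemeister (G \<times>\<times> H) \<phi> = rmul (reidemeister G \<alpha>) (reidemeister H \<beta>)"
proof -
  interpret tG: twist G \<alpha> using G a by (simp add: twist_def twist_axioms_def)
  interpret tH: twist H \<beta> using H b by (simp add: twist_def twist_axioms_def)
  have PG: "group (G \<times>\<times> H)" by (rule DirProd_group[OF G H])
  interpret P: twist "G \<times>\<times> H" \<phi> using PG p by (simp add: twist_def twist_axioms_def)
  let ?P = "G \<times>\<times> H"
  have a1: "\<alpha> \<one>\<^bsub>G\<^esub> = \<one>\<^bsub>G\<^esub>" by (rule hom_one[OF a G G])
  have b1: "\<beta> \<one>\<^bsub>H\<^esub> = \<one>\<^bsub>H\<^esub>" by (rule hom_one[OF b H H])
  let ?X = "reid_classes ?P \<phi>" and ?A = "reid_classes G \<alpha>" and ?B = "reid_classes H \<beta>"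
  have twf: "tw ?P \<phi> (x, y) (g, h) = (tw G \<alpha> x g, y \<otimes>\<^bsub>H\<^esub> h \<otimes>\<^bsub>H\<^esub> inv\<^bsub>H\<^esub> (\<delta> x \<otimes>\<^bsub>H\<^esub> \<beta> y))"
    if "x \<in> carrier G" "g \<in> carrier G" "y \<in> carrier H" "h \<in> carrier H" for x y g h
    using that dc by (simp add: tw_def form G H)
  have s1: "fst ` tcls ?P \<phi> (g, h) = tcls G \<alpha> g" if g: "g \<in> carrier G" and h: "h \<in> carrier H" for g h
  proof -
    have "fst ` tcls ?P \<phi> (g, h) = (\<lambda>q. tw G \<alpha> (fst q) g) ` (carrier G \<times> carrier H)"
      unfolding tcls_def by (auto simp: image_image twf g h intro!: image_cong)
    also have "\<dots> = (\<lambda>x. tw G \<alpha> x g) ` carrier G" by (auto intro: image_eqI[where x="(_, \<one>\<^bsub>H\<^esub>)"])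
    finally show ?thesis by (simp add: tcls_def)
  qed
  have Aeq: "?A = (\<lambda>c. fst ` c) ` ?X"
  proof -
    have "(\<lambda>c. fst ` c) ` ?X = (\<lambda>q. fst ` tcls ?P \<phi> q) ` (carrier G \<times> carrier H)"
      by (simp add: reid_classes_tcls image_image)
    also have "\<dots> = (\<lambda>q. tcls G \<alpha> (fst q)) ` (carrier G \<times> carrier H)"
    proof (rule image_cong[OF refl])
      fix q assume "q \<in> carrier G \<times> carrier H"
      then obtain g h where "q = (g, h)" "g \<in> carrier G" "h \<in> carrier H" by auto
      thus "fst ` tcls ?P \<phi> q = tcls G \<alpha> (fst q)" using s1 by simp
    qed
    also have "\<dots> = ?A" by (force simp: reid_classes_tcls intro: image_eqI[where x="(_, \<one>\<^bsub>H\<^esub>)"])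
    finally show ?thesis by simp
  qed
  show ?thesis
  proof (cases "finite ?A")
    case False
    hence "\<not> finite ?X" using Aeq by auto
    thus ?thesis using False by (simp add: reidemeister_def rmul_def)
  next
    case finA: True
    note fx = fixp[OF finA]
    have s2: "tcls ?P \<phi> (g0, h) = tcls ?P \<phi> (g0, h') \<longleftrightarrow> tcls H \<beta> h = tcls H \<beta> h'"
      if g0: "g0 \<in> carrier G" and h: "h \<in> carrier H" and h': "h' \<in> carrier H" for g0 h h'
    proof
      assume "tcls ?P \<phi> (g0, h) = tcls ?P \<phi> (g0, h')"
      hence "(g0, h') \<in> tcls ?P \<phi> (g0, h)" using P.tcls_self[of "(g0, h')"] g0 h' by simp
      then obtain x y where xy: "x \<in> carrier G" "y \<in> carrier H" "(g0, h') = tw ?P \<phi> (x, y) (g0, h)"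
        by (auto simp: tcls_def)
      hence "tw G \<alpha> x g0 = g0" and e2: "h' = y \<otimes>\<^bsub>H\<^esub> h \<otimes>\<^bsub>H\<^esub> inv\<^bsub>H\<^esub> (\<delta> x \<otimes>\<^bsub>H\<^esub> \<beta> y)"
        using twf g0 h by auto
      hence "x = \<one>\<^bsub>G\<^esub>" using fx g0 xy by (simp add: tw_def)
      hence "h' = tw H \<beta> y h" using e2 d1 xy h by (simp add: tw_def)
      hence "h' \<in> tcls H \<beta> h" using xy by (auto simp: tcls_def)
      thus "tcls H \<beta> h = tcls H \<beta> h'" using tH.tcls_eq[OF h] by simp
    next
      assume "tcls H \<beta> h = tcls H \<beta> h'"
      hence "h' \<in> tcls H \<beta> h" using tH.tcls_self[OF h'] by simp
      then obtain y where y: "y \<in> carrier H" "h' = tw H \<beta> y h" by (auto simp: tcls_def)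
      have "tw ?P \<phi> (\<one>\<^bsub>G\<^esub>, y) (g0, h) = (g0, h')"
        using twf[of "\<one>\<^bsub>G\<^esub>" g0 y h] g0 h y d1 a1 by (simp add: tw_def)
      hence "(g0, h') \<in> tcls ?P \<phi> (g0, h)" using y unfolding tcls_def by force
      thus "tcls ?P \<phi> (g0, h) = tcls ?P \<phi> (g0, h')" using P.tcls_eq[of "(g0, h)"] g0 h by simp
    qed
    define fib where "fib C = {c \<in> ?X. fst ` c = C}" for C
    have s3: "fib (tcls G \<alpha> g0) = (\<lambda>h. tcls ?P \<phi> (g0, h)) ` carrier H" if g0: "g0 \<in> carrier G" for g0
    proof
      show "(\<lambda>h. tcls ?P \<phi> (g0, h)) ` carrier H \<subseteq> fib (tcls G \<alpha> g0)"
        using g0 s1 by (auto simp: fib_def reid_classes_tcls)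
      show "fib (tcls G \<alpha> g0) \<subseteq> (\<lambda>h. tcls ?P \<phi> (g0, h)) ` carrier H"
      proof
        fix c assume "c \<in> fib (tcls G \<alpha> g0)"
        then obtain g h where gh: "g \<in> carrier G" "h \<in> carrier H" "c = tcls ?P \<phi> (g, h)"
          and fe: "fst ` c = tcls G \<alpha> g0" by (auto simp: fib_def reid_classes_tcls)
        have "tcls G \<alpha> g = tcls G \<alpha> g0" using fe s1 gh by simp
        hence "g0 \<in> tcls G \<alpha> g" using tG.tcls_self[OF g0] by simp
        then obtain x where x: "x \<in> carrier G" "g0 = tw G \<alpha> x g" by (auto simp: tcls_def)
        let ?h = "\<one>\<^bsub>H\<^esub> \<otimes>\<^bsub>H\<^esub> h \<otimes>\<^bsub>H\<^esub> inv\<^bsub>H\<^esub> (\<delta> x \<otimes>\<^bsub>H\<^esub> \<beta> \<one>\<^bsub>H\<^esub>)"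
        have hc: "?h \<in> carrier H" using gh x dc by simp
        have "tw ?P \<phi> (x, \<one>\<^bsub>H\<^esub>) (g, h) = (g0, ?h)" using twf x gh by simp
        hence "(g0, ?h) \<in> tcls ?P \<phi> (g, h)" using x unfolding tcls_def by force
        hence "tcls ?P \<phi> (g0, ?h) = c" using P.tcls_eq[of "(g, h)"] gh by simp
        thus "c \<in> (\<lambda>h. tcls ?P \<phi> (g0, h)) ` carrier H" using hc by force
      qed
    qed
    have Beq: "?B = (\<lambda>h. tcls H \<beta> h) ` carrier H" by (rule reid_classes_tcls)
    have kk: "\<And>x y. x \<in> carrier H \<Longrightarrow> y \<in> carrier H \<Longrightarrow>
        (tcls ?P \<phi> (g0, x) = tcls ?P \<phi> (g0, y)) \<longleftrightarrow> (tcls H \<beta> x = tcls H \<beta> y)"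
      if g0: "g0 \<in> carrier G" for g0 using s2[OF g0] by blast
    have cf: "card (fib (tcls G \<alpha> g0)) = card ?B" if g0: "g0 \<in> carrier G" for g0
      unfolding s3[OF g0] Beq by (rule card_kernel[OF kk[OF g0]])
    have ff: "finite (fib (tcls G \<alpha> g0)) \<longleftrightarrow> finite ?B" if g0: "g0 \<in> carrier G" for g0
      unfolding s3[OF g0] Beq by (rule finite_kernel[OF kk[OF g0]])
    have Xeq: "?X = (\<Union>C\<in>?A. fib C)" using Aeq by (auto simp: fib_def)
    show ?thesis
    proof (cases "finite ?B")
      case False
      have "fib (tcls G \<alpha> \<one>\<^bsub>G\<^esub>) \<subseteq> ?X" by (auto simp: fib_def)
      moreover have "\<not> finite (fib (tcls G \<alpha> \<one>\<^bsub>G\<^esub>))" using ff[of "\<one>\<^bsub>G\<^esub>"] False by simp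
      ultimately have "\<not> finite ?X" using finite_subset by blast
      thus ?thesis using False finA by (simp add: reidemeister_def rmul_def)
    next
      case finB: True
      have fibC: "finite (fib C) \<and> card (fib C) = card ?B" if "C \<in> ?A" for C
        using that cf ff finB by (auto simp: reid_classes_tcls)
      have "card ?X = (\<Sum>C\<in>?A. card (fib C))" unfolding Xeq
        by (rule card_UN_disjoint) (use finA fibC in \<open>auto simp: fib_def\<close>)
      also have "\<dots> = card ?A * card ?B" using fibC by simp
      finally have cX: "card ?X = card ?A * card ?B" .
      have "finite ?X" unfolding Xeq using finA fibC by auto
      thus ?thesis using cX finA finB by (simp add: reidemeister_def rmul_def)
    qed
  qed
qed

lemma prod_auto:
  assumes G: "group G" and H: "group H" and a: "\<alpha> \<in> auto G" and b: "\<beta> \<in> auto H"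
  shows "(\<lambda>p\<in>carrier (G \<times>\<times> H). (\<alpha> (fst p), \<beta> (snd p))) \<in> auto (G \<times>\<times> H)"
proof -
  have ah: "\<alpha> \<in> hom G G" and ab: "bij_betw \<alpha> (carrier G) (carrier G)" using a by (auto simp: auto_def Bij_def)
  have bh: "\<beta> \<in> hom H H" and bb: "bij_betw \<beta> (carrier H) (carrier H)" using b by (auto simp: auto_def Bij_def)
  let ?f = "\<lambda>p\<in>carrier (G \<times>\<times> H). (\<alpha> (fst p), \<beta> (snd p))"
  interpret G: group G by fact
  interpret H: group H by fact
  have ac: "\<alpha> x \<in> carrier G" if "x \<in> carrier G" for x using ah that by (auto simp: hom_def)
  have bc: "\<beta> x \<in> carrier H" if "x \<in> carrier H" for x using bh that by (auto simp: hom_def)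
  have "?f \<in> hom (G \<times>\<times> H) (G \<times>\<times> H)"
  proof (rule homI)
    fix p assume "p \<in> carrier (G \<times>\<times> H)" thus "?f p \<in> carrier (G \<times>\<times> H)" using ac bc by auto
  next
    fix p q assume p: "p \<in> carrier (G \<times>\<times> H)" and q: "q \<in> carrier (G \<times>\<times> H)"
    then obtain x y u v where "p = (x, y)" "q = (u, v)" "x \<in> carrier G" "y \<in> carrier H" "u \<in> carrier G" "v \<in> carrier H"
      by auto
    thus "?f (p \<otimes>\<^bsub>G \<times>\<times> H\<^esub> q) = ?f p \<otimes>\<^bsub>G \<times>\<times> H\<^esub> ?f q"
      using ah bh by (simp add: hom_mult)
  qed
  moreover have "bij_betw ?f (carrier (G \<times>\<times> H)) (carrier (G \<times>\<times> H))"
  proof -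
    have "bij_betw (\<lambda>(x, y). (\<alpha> x, \<beta> y)) (carrier G \<times> carrier H) (carrier G \<times> carrier H)"
      by (rule bij_betw_map_prod[OF ab bb, unfolded map_prod_def])
    moreover have "bij_betw ?f (carrier G \<times> carrier H) (carrier G \<times> carrier H) =
      bij_betw (\<lambda>(x, y). (\<alpha> x, \<beta> y)) (carrier G \<times> carrier H) (carrier G \<times> carrier H)"
      by (rule bij_betw_cong) auto
    ultimately show ?thesis by simp
  qed
  ultimately show ?thesis by (simp add: auto_def Bij_def)
qed

lemma reid_prod:
  assumes G: "group G" and H: "group H" and a: "\<alpha> \<in> auto G" and b: "\<beta> \<in> auto H"
    and fixp: "finite (reid_classes G \<alpha>) \<Longrightarrow> (\<And>g x. g \<in> carrier G \<Longrightarrow> x \<in> carrier G \<Longrightarrow>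
                 x \<otimes>\<^bsub>G\<^esub> g \<otimes>\<^bsub>G\<^esub> inv\<^bsub>G\<^esub> (\<alpha> x) = g \<Longrightarrow> x = \<one>\<^bsub>G\<^esub>)"
  shows "reidemeister (G \<times>\<times> H) (\<lambda>p\<in>carrier (G \<times>\<times> H). (\<alpha> (fst p), \<beta> (snd p)))
           = rmul (reidemeister G \<alpha>) (reidemeister H \<beta>)"
proof (rule count[OF G H _ _ _ _ _ _ fixp])
  show "\<alpha> \<in> hom G G" "\<beta> \<in> hom H H" using a b by (auto simp: auto_def)
  show "(\<lambda>p\<in>carrier (G \<times>\<times> H). (\<alpha> (fst p), \<beta> (snd p))) \<in> hom (G \<times>\<times> H) (G \<times>\<times> H)"
    using prod_auto[OF assms(1-4)] by (simp add: auto_def)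
  show "\<And>g. g \<in> carrier G \<Longrightarrow> \<one>\<^bsub>H\<^esub> \<in> carrier H" using H by (simp add: group.is_monoid monoid.one_closed)
  show "(\<lambda>_. \<one>\<^bsub>H\<^esub>) \<one>\<^bsub>G\<^esub> = \<one>\<^bsub>H\<^esub>" by simp
  have bc: "\<beta> h \<in> carrier H" if "h \<in> carrier H" for h using b that by (auto simp: auto_def hom_def)
  show "\<And>g h. g \<in> carrier G \<Longrightarrow> h \<in> carrier H \<Longrightarrow>
    (\<lambda>p\<in>carrier (G \<times>\<times> H). (\<alpha> (fst p), \<beta> (snd p))) (g, h) = (\<alpha> g, (\<lambda>_. \<one>\<^bsub>H\<^esub>) g \<otimes>\<^bsub>H\<^esub> \<beta> h)"
    using bc H by (simp add: group.is_monoid monoid.l_one)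
qed

lemma decomp:
  assumes G: "group G" and H: "group H" and p: "\<phi> \<in> auto (G \<times>\<times> H)"
    and ch: "characteristic ({\<one>\<^bsub>G\<^esub>} \<times> carrier H) (G \<times>\<times> H)"
  obtains \<alpha> \<beta> \<delta> where "\<alpha> \<in> auto G" "\<beta> \<in> auto H" "\<And>g. g \<in> carrier G \<Longrightarrow> \<delta> g \<in> carrier H"
    "\<delta> \<one>\<^bsub>G\<^esub> = \<one>\<^bsub>H\<^esub>"
    "\<And>g h. g \<in> carrier G \<Longrightarrow> h \<in> carrier H \<Longrightarrow> \<phi> (g, h) = (\<alpha> g, \<delta> g \<otimes>\<^bsub>H\<^esub> \<beta> h)"
proof -
  interpret G: group G by fact
  interpret H: group H by fact
  have PG: "group (G \<times>\<times> H)" by (rule DirProd_group[OF G H])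
  have phom: "\<phi> \<in> hom (G \<times>\<times> H) (G \<times>\<times> H)" and pbij: "bij_betw \<phi> (carrier G \<times> carrier H) (carrier G \<times> carrier H)"
    using p by (auto simp: auto_def Bij_def)
  have pinj: "inj_on \<phi> (carrier G \<times> carrier H)" using pbij by (simp add: bij_betw_def)
  have psurj: "\<phi> ` (carrier G \<times> carrier H) = carrier G \<times> carrier H" using pbij by (simp add: bij_betw_def)
  have chimg: "\<phi> ` ({\<one>\<^bsub>G\<^esub>} \<times> carrier H) = {\<one>\<^bsub>G\<^esub>} \<times> carrier H"
    using ch p by (simp add: characteristic_def)
  have pc: "\<phi> (g, h) \<in> carrier G \<times> carrier H" if "g \<in> carrier G" "h \<in> carrier H" for g h
    using phom that by (auto simp: hom_def Pi_def)
  have one1: "\<phi> (\<one>\<^bsub>G\<^esub>, \<one>\<^bsub>H\<^esub>) = (\<one>\<^bsub>G\<^esub>, \<one>\<^bsub>H\<^esub>)"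
    using hom_one[OF phom PG PG] by simp
  have f1: "\<phi> (\<one>\<^bsub>G\<^esub>, h) = (\<one>\<^bsub>G\<^esub>, snd (\<phi> (\<one>\<^bsub>G\<^esub>, h)))" if h: "h \<in> carrier H" for h
  proof -
    have "\<phi> (\<one>\<^bsub>G\<^esub>, h) \<in> {\<one>\<^bsub>G\<^esub>} \<times> carrier H" using chimg h by blast
    thus ?thesis by (cases "\<phi> (\<one>\<^bsub>G\<^esub>, h)") auto
  qed
  have pm: "\<phi> ((g, h) \<otimes>\<^bsub>G \<times>\<times> H\<^esub> (g', h')) = \<phi> (g, h) \<otimes>\<^bsub>G \<times>\<times> H\<^esub> \<phi> (g', h')"
    if "g \<in> carrier G" "h \<in> carrier H" "g' \<in> carrier G" "h' \<in> carrier H" for g h g' h'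
    using hom_mult[OF phom, of "(g, h)" "(g', h')"] that by simp
  define \<alpha> where "\<alpha> = (\<lambda>g\<in>carrier G. fst (\<phi> (g, \<one>\<^bsub>H\<^esub>)))"
  define \<beta> where "\<beta> = (\<lambda>h\<in>carrier H. snd (\<phi> (\<one>\<^bsub>G\<^esub>, h)))"
  define \<delta> where "\<delta> = (\<lambda>g. snd (\<phi> (g, \<one>\<^bsub>H\<^esub>)))"
  have dec: "\<phi> (g, h) = (\<alpha> g, \<delta> g \<otimes>\<^bsub>H\<^esub> \<beta> h)" if g: "g \<in> carrier G" and h: "h \<in> carrier H" for g h
  proof -
    have "\<phi> (g, h) = \<phi> ((g, \<one>\<^bsub>H\<^esub>) \<otimes>\<^bsub>G \<times>\<times> H\<^esub> (\<one>\<^bsub>G\<^esub>, h))" using g h by simp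
    also have "\<dots> = \<phi> (g, \<one>\<^bsub>H\<^esub>) \<otimes>\<^bsub>G \<times>\<times> H\<^esub> \<phi> (\<one>\<^bsub>G\<^esub>, h)"
      using pm[of g "\<one>\<^bsub>H\<^esub>" "\<one>\<^bsub>G\<^esub>" h] g h by simp
    also have "\<dots> = (\<alpha> g, \<delta> g \<otimes>\<^bsub>H\<^esub> \<beta> h)"
    proof -
      have e1: "fst (\<phi> (\<one>\<^bsub>G\<^esub>, h)) = \<one>\<^bsub>G\<^esub>" using f1[OF h] by (metis fst_conv)
      obtain u v where uv: "\<phi> (g, \<one>\<^bsub>H\<^esub>) = (u, v)" "u \<in> carrier G" "v \<in> carrier H"
        using pc[OF g H.one_closed] by auto
      show ?thesis using e1 uv g h by (simp add: \<alpha>_def \<beta>_def \<delta>_def mult_DirProd')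
    qed
    finally show ?thesis .
  qed
  have ac: "\<alpha> g \<in> carrier G" and dc: "\<delta> g \<in> carrier H" if "g \<in> carrier G" for g
    using pc[OF that H.one_closed] that by (auto simp: \<alpha>_def \<delta>_def)
  have bc: "\<beta> h \<in> carrier H" if "h \<in> carrier H" for h
    using pc[OF G.one_closed that] that by (auto simp: \<beta>_def)
  have ahom: "\<alpha> \<in> hom G G"
  proof (rule homI)
    fix x y assume x: "x \<in> carrier G" and y: "y \<in> carrier G"
    have "\<phi> (x \<otimes>\<^bsub>G\<^esub> y, \<one>\<^bsub>H\<^esub>) = \<phi> ((x, \<one>\<^bsub>H\<^esub>) \<otimes>\<^bsub>G \<times>\<times> H\<^esub> (y, \<one>\<^bsub>H\<^esub>))" by simp
    also have "\<dots> = \<phi> (x, \<one>\<^bsub>H\<^esub>) \<otimes>\<^bsub>G \<times>\<times> H\<^esub> \<phi> (y, \<one>\<^bsub>H\<^esub>)" using pm[of x "\<one>\<^bsub>H\<^esub>" y "\<one>\<^bsub>H\<^esub>"] x y by simp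
    finally show "\<alpha> (x \<otimes>\<^bsub>G\<^esub> y) = \<alpha> x \<otimes>\<^bsub>G\<^esub> \<alpha> y" using x y by (simp add: \<alpha>_def mult_DirProd')
  qed (rule ac)
  have bhom: "\<beta> \<in> hom H H"
  proof (rule homI)
    fix x y assume x: "x \<in> carrier H" and y: "y \<in> carrier H"
    have "\<phi> (\<one>\<^bsub>G\<^esub>, x \<otimes>\<^bsub>H\<^esub> y) = \<phi> ((\<one>\<^bsub>G\<^esub>, x) \<otimes>\<^bsub>G \<times>\<times> H\<^esub> (\<one>\<^bsub>G\<^esub>, y))" by simp
    also have "\<dots> = \<phi> (\<one>\<^bsub>G\<^esub>, x) \<otimes>\<^bsub>G \<times>\<times> H\<^esub> \<phi> (\<one>\<^bsub>G\<^esub>, y)" using pm[of "\<one>\<^bsub>G\<^esub>" x "\<one>\<^bsub>G\<^esub>" y] x y by simp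
    finally show "\<beta> (x \<otimes>\<^bsub>H\<^esub> y) = \<beta> x \<otimes>\<^bsub>H\<^esub> \<beta> y" using x y by (simp add: \<beta>_def mult_DirProd')
  qed (rule bc)
  interpret ga: group_hom G G \<alpha> using ahom by unfold_locales
  have abij: "bij_betw \<alpha> (carrier G) (carrier G)"
  proof (rule bij_betw_imageI)
    show "inj_on \<alpha> (carrier G)"
    proof (rule inj_onI)
      fix x y assume x: "x \<in> carrier G" and y: "y \<in> carrier G" and e: "\<alpha> x = \<alpha> y"
      let ?k = "x \<otimes>\<^bsub>G\<^esub> inv\<^bsub>G\<^esub> y"
      have k: "?k \<in> carrier G" using x y by simp
      have "\<alpha> ?k = \<one>\<^bsub>G\<^esub>" using x y e ac by (simp add: ga.hom_mult)
      hence "\<phi> (?k, \<one>\<^bsub>H\<^esub>) \<in> {\<one>\<^bsub>G\<^esub>} \<times> carrier H" using dec[OF k H.one_closed] dc[OF k] bc by simp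
      hence "\<phi> (?k, \<one>\<^bsub>H\<^esub>) \<in> \<phi> ` ({\<one>\<^bsub>G\<^esub>} \<times> carrier H)" using chimg by simp
      then obtain h where h: "h \<in> carrier H" "\<phi> (?k, \<one>\<^bsub>H\<^esub>) = \<phi> (\<one>\<^bsub>G\<^esub>, h)"
        by auto
      hence "(?k, \<one>\<^bsub>H\<^esub>) = (\<one>\<^bsub>G\<^esub>, h)" using pinj k by (auto simp: inj_on_def)
      hence "?k = \<one>\<^bsub>G\<^esub>" by simp
      thus "x = y" using G.inv_solve_right'[of "\<one>\<^bsub>G\<^esub>" x y] x y by simp
    qed
    show "\<alpha> ` carrier G = carrier G"
    proof
      show "\<alpha> ` carrier G \<subseteq> carrier G" using ac by auto
      show "carrier G \<subseteq> \<alpha> ` carrier G"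
      proof
        fix z assume z: "z \<in> carrier G"
        hence "(z, \<one>\<^bsub>H\<^esub>) \<in> \<phi> ` (carrier G \<times> carrier H)" using psurj by simp
        then obtain g h where "g \<in> carrier G" "h \<in> carrier H" "(z, \<one>\<^bsub>H\<^esub>) = \<phi> (g, h)" by auto
        thus "z \<in> \<alpha> ` carrier G" using dec by auto
      qed
    qed
  qed
  have bbij: "bij_betw \<beta> (carrier H) (carrier H)"
  proof (rule bij_betw_imageI)
    show "inj_on \<beta> (carrier H)"
    proof (rule inj_onI)
      fix x y assume x: "x \<in> carrier H" and y: "y \<in> carrier H" and e: "\<beta> x = \<beta> y"
      have "\<phi> (\<one>\<^bsub>G\<^esub>, x) = \<phi> (\<one>\<^bsub>G\<^esub>, y)" using f1[OF x] f1[OF y] e x y by (simp add: \<beta>_def)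
      thus "x = y" using pinj x y by (auto simp: inj_on_def)
    qed
    show "\<beta> ` carrier H = carrier H"
    proof
      show "\<beta> ` carrier H \<subseteq> carrier H" using bc by auto
      show "carrier H \<subseteq> \<beta> ` carrier H"
      proof
        fix z assume z: "z \<in> carrier H"
        hence "(\<one>\<^bsub>G\<^esub>, z) \<in> \<phi> ` ({\<one>\<^bsub>G\<^esub>} \<times> carrier H)" using chimg by simp
        then obtain h where hh: "h \<in> carrier H" "(\<one>\<^bsub>G\<^esub>, z) = \<phi> (\<one>\<^bsub>G\<^esub>, h)" by auto
        have "z = snd (\<phi> (\<one>\<^bsub>G\<^esub>, h))" using arg_cong[OF hh(2), of snd] by simp
        hence "z = \<beta> h" using hh(1) by (simp add: \<beta>_def)
        thus "z \<in> \<beta> ` carrier H" using hh(1) by blast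
      qed
    qed
  qed
  have "\<alpha> \<in> auto G" using ahom abij by (simp add: auto_def Bij_def \<alpha>_def)
  moreover have "\<beta> \<in> auto H" using bhom bbij by (simp add: auto_def Bij_def \<beta>_def)
  moreover have "\<delta> \<one>\<^bsub>G\<^esub> = \<one>\<^bsub>H\<^esub>" using one1 by (simp add: \<delta>_def)
  ultimately show ?thesis by (intro that[of \<alpha> \<beta> \<delta>]) (use dc dec in auto)
qed

theorem mainTheorem12:
  fixes G :: "'a monoid" and H :: "'b monoid"
  assumes "group G" and "group H"
    and "fin_gen_group G" and "torsion_free G" and "residually_finite G"
    and "characteristic ({\<one>\<^bsub>G\<^esub>} \<times> carrier H) (G \<times>\<times> H)"
  shows "spec_R (G \<times>\<times> H) = set_rmul (spec_R G) (spec_R H)"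
proof -
  note G = assms(1) and H = assms(2)
  interpret G: group G by fact
  have fx: "\<And>g x. g \<in> carrier G \<Longrightarrow> x \<in> carrier G \<Longrightarrow>
                 x \<otimes>\<^bsub>G\<^esub> g \<otimes>\<^bsub>G\<^esub> inv\<^bsub>G\<^esub> (\<alpha> x) = g \<Longrightarrow> x = \<one>\<^bsub>G\<^esub>"
    if "\<alpha> \<in> auto G" "finite (reid_classes G \<alpha>)" for \<alpha>
    using G.key_twisted[OF assms(3-5) that] by blast
  show ?thesis
  proof
    show "spec_R (G \<times>\<times> H) \<subseteq> set_rmul (spec_R G) (spec_R H)"
    proof
      fix r assume "r \<in> spec_R (G \<times>\<times> H)"
      then obtain \<phi> where p: "\<phi> \<in> auto (G \<times>\<times> H)" "r = reidemeister (G \<times>\<times> H) \<phi>"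
        by (auto simp: spec_R_def)
      obtain \<alpha> \<beta> \<delta> where d: "\<alpha> \<in> auto G" "\<beta> \<in> auto H" "\<And>g. g \<in> carrier G \<Longrightarrow> \<delta> g \<in> carrier H"
        "\<delta> \<one>\<^bsub>G\<^esub> = \<one>\<^bsub>H\<^esub>"
        "\<And>g h. g \<in> carrier G \<Longrightarrow> h \<in> carrier H \<Longrightarrow> \<phi> (g, h) = (\<alpha> g, \<delta> g \<otimes>\<^bsub>H\<^esub> \<beta> h)"
        using decomp[OF G H p(1) assms(6)] by blast
      have "r = rmul (reidemeister G \<alpha>) (reidemeister H \<beta>)"
        unfolding p(2)
        by (rule count[of G H \<alpha> \<beta> \<phi> \<delta>, OF G H _ _ _ d(3,4,5) fx[OF d(1)]]) (use d(1,2) p(1) in \<open>auto simp: auto_def\<close>)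
      thus "r \<in> set_rmul (spec_R G) (spec_R H)" using d(1,2) by (auto simp: set_rmul_def spec_R_def)
    qed
    show "set_rmul (spec_R G) (spec_R H) \<subseteq> spec_R (G \<times>\<times> H)"
    proof
      fix r assume "r \<in> set_rmul (spec_R G) (spec_R H)"
      then obtain \<alpha> \<beta> where ab: "\<alpha> \<in> auto G" "\<beta> \<in> auto H" "r = rmul (reidemeister G \<alpha>) (reidemeister H \<beta>)"
        by (auto simp: set_rmul_def spec_R_def)
      have "r = reidemeister (G \<times>\<times> H) (\<lambda>p\<in>carrier (G \<times>\<times> H). (\<alpha> (fst p), \<beta> (snd p)))"
        unfolding ab(3) by (rule reid_prod[OF G H ab(1,2) fx[OF ab(1)], symmetric])
      thus "r \<in> spec_R (G \<times>\<times> H)" using prod_auto[OF G H ab(1,2)] by (auto simp: spec_R_def)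
    qed
  qed
qed

end
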